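(* (i) Let $G$ be a digraph on $n$ vertices with $\delta^0(G)\geq 7n/8$ and let $x,y\in V(G)$ be distinct. Then for every orientation $Q$ of a path on $n$ vertices, $G$ contains a Hamilton path which is a copy of $Q$ whose endvertices are mapped to $x$ and $y$ (initial vertex of $Q$ to $x$, final vertex to $y$). (ii) Let $m\geq 10$ and let $G$ be a bipartite digraph with vertex classes $A,B$, $|A|=m+1$, $|B|=m$ (all edges go between $A$ and $B$, in either direction), and suppose $\delta^0(G)\geq (7m+2)/8$. Let $x,y\in A$ be distinct. Then for every orientation $Q$ of a path on $2m+1$ vertices, $G$ contains a Hamilton path which is a copy of $Q$ whose initial vertex is mapped to $x$ and final vertex to $y$.
   Context: A digraph has no loops and at most one edge from $x$ to $y$ for each ordered pair of distinct vertices (edges $xy$ and $yx$ may both be present). $\delta^0(G)$ is the minimum over all vertices of the minimum of in- and outdegree. A copy of an oriented path $Q$ in $G$ is an injective map $\phi:V(Q)\to V(G)$ with $\phi(u)\phi(v)\in E(G)$ for every edge $uv$ of $Q$; it is a Hamilton path if $\phi$ is a bijection. *)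

theory Defs
  imports Main
begin

definition digraph :: "'a set \<Rightarrow> ('a \<Rightarrow> 'a \<Rightarrow> bool) \<Rightarrow> bool" where
  "digraph V E \<longleftrightarrow> finite V \<and> (\<forall>x y. E x y \<longrightarrow> x \<in> V \<and> y \<in> V \<and> x \<noteq> y)"

definition outdeg :: "'a set \<Rightarrow> ('a \<Rightarrow> 'a \<Rightarrow> bool) \<Rightarrow> 'a \<Rightarrow> nat" where
  "outdeg V E v = card {u \<in> V. E v u}"

definition indeg :: "'a set \<Rightarrow> ('a \<Rightarrow> 'a \<Rightarrow> bool) \<Rightarrow> 'a \<Rightarrow> nat" where
  "indeg V E v = card {u \<in> V. E u v}"

definition min_semideg :: "'a set \<Rightarrow> ('a \<Rightarrow> 'a \<Rightarrow> bool) \<Rightarrow> nat" where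
  "min_semideg V E = Min ((\<lambda>v. min (outdeg V E v) (indeg V E v)) ` V)"

text \<open>An oriented path Q on n vertices 0,...,n-1 is given by a direction
  function dir: for i < n-1, dir i = True means the edge (i, i+1), False means (i+1, i).
  Edges of Q:\<close>
definition opath_edge :: "nat \<Rightarrow> (nat \<Rightarrow> bool) \<Rightarrow> nat \<Rightarrow> nat \<Rightarrow> bool" where
  "opath_edge n dir i j \<longleftrightarrow> i < n \<and> j < n \<and>
     ((j = Suc i \<and> dir i) \<or> (i = Suc j \<and> \<not> dir j))"

definition is_copy :: "nat \<Rightarrow> (nat \<Rightarrow> bool) \<Rightarrow> 'a set \<Rightarrow> ('a \<Rightarrow> 'a \<Rightarrow> bool) \<Rightarrow> (nat \<Rightarrow> 'a) \<Rightarrow> bool" where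
  "is_copy n dir V E \<phi> \<longleftrightarrow> inj_on \<phi> {..<n} \<and> \<phi> ` {..<n} \<subseteq> V \<and>
     (\<forall>i j. opath_edge n dir i j \<longrightarrow> E (\<phi> i) (\<phi> j))"

definition hamilton_copy :: "nat \<Rightarrow> (nat \<Rightarrow> bool) \<Rightarrow> 'a set \<Rightarrow> ('a \<Rightarrow> 'a \<Rightarrow> bool) \<Rightarrow> (nat \<Rightarrow> 'a) \<Rightarrow> bool" where
  "hamilton_copy n dir V E \<phi> \<longleftrightarrow> is_copy n dir V E \<phi> \<and> bij_betw \<phi> {..<n} V"

end

theory Submission
  imports Defs
begin


definition okrel :: "('a \<Rightarrow> 'a \<Rightarrow> bool) \<Rightarrow> bool \<Rightarrow> 'a \<Rightarrow> 'a \<Rightarrow> bool" where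
  "okrel E d a b = (if d then E a b else E b a)"

definition badset :: "('a \<Rightarrow> 'a \<Rightarrow> bool) \<Rightarrow> (nat \<Rightarrow> bool) \<Rightarrow> nat \<Rightarrow> (nat \<Rightarrow> 'a) \<Rightarrow> nat set" where
  "badset E dir N \<phi> = {p. Suc p < N \<and> \<not> okrel E (dir p) (\<phi> p) (\<phi> (Suc p))}"

lemma descent:
  assumes "P \<phi>0"
    and step: "\<And>\<phi>. P \<phi> \<Longrightarrow> badset E dir N \<phi> \<noteq> {} \<Longrightarrow> \<exists>\<phi>'. P \<phi>' \<and> badset E dir N \<phi>' \<subset> badset E dir N \<phi>"
  shows "\<exists>\<phi>. P \<phi> \<and> badset E dir N \<phi> = {}"
proof -
  have fin: "finite (badset E dir N \<phi>)" for \<phi>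
    unfolding badset_def by (rule finite_subset[of _ "{..<N}"]) auto
  have "\<forall>\<phi>. P \<phi> \<and> card (badset E dir N \<phi>) = k \<longrightarrow> (\<exists>\<psi>. P \<psi> \<and> badset E dir N \<psi> = {})" for k
  proof (induction k rule: less_induct)
    case (less k)
    show ?case
    proof (intro allI impI)
      fix \<phi> assume h: "P \<phi> \<and> card (badset E dir N \<phi>) = k"
      show "\<exists>\<psi>. P \<psi> \<and> badset E dir N \<psi> = {}"
      proof (cases "badset E dir N \<phi> = {}")
        case True with h show ?thesis by blast
      next
        case False
        then obtain \<phi>' where p: "P \<phi>'" and s: "badset E dir N \<phi>' \<subset> badset E dir N \<phi>"
          using step h by blast
        have "card (badset E dir N \<phi>') < k" using h psubset_card_mono[OF fin s] by simp
        then show ?thesis using less p by blast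
      qed
    qed
  qed
  then show ?thesis using assms(1) by blast
qed

lemma swap_bad:
  assumes "1 \<le> i" "Suc i < N" "1 \<le> j" "Suc j < N" "Suc i < j \<or> Suc j < i"
    "okrel E (dir (i-1)) (\<phi> (i-1)) (\<phi> j)" "okrel E (dir i) (\<phi> j) (\<phi> (Suc i))"
    "okrel E (dir (j-1)) (\<phi> (j-1)) (\<phi> i)" "okrel E (dir j) (\<phi> i) (\<phi> (Suc j))"
  shows "badset E dir N (\<phi>(i := \<phi> j, j := \<phi> i)) \<subseteq> badset E dir N \<phi> - {i-1, i}"
proof
  fix p assume "p \<in> badset E dir N (\<phi>(i := \<phi> j, j := \<phi> i))"
  then have p: "Suc p < N" "\<not> okrel E (dir p) ((\<phi>(i := \<phi> j, j := \<phi> i)) p) ((\<phi>(i := \<phi> j, j := \<phi> i)) (Suc p))"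
    unfolding badset_def by auto
  consider "p = i-1" | "p = i" | "p = j-1" | "p = j" | "p \<notin> {i-1,i,j-1,j}" by blast
  then show "p \<in> badset E dir N \<phi> - {i-1, i}"
  proof cases
    case 1 then show ?thesis using p assms by (auto split: if_splits)
  next
    case 2 then show ?thesis using p assms by (auto split: if_splits)
  next
    case 3 then show ?thesis using p assms by (auto split: if_splits)
  next
    case 4 then show ?thesis using p assms by (auto split: if_splits)
  next
    case 5
    then have "(\<phi>(i := \<phi> j, j := \<phi> i)) p = \<phi> p" "(\<phi>(i := \<phi> j, j := \<phi> i)) (Suc p) = \<phi> (Suc p)"
      using assms by auto
    then show ?thesis using p 5 unfolding badset_def by auto
  qed
qed

lemma swap_bij:
  assumes "bij_betw \<phi> S T" "i \<in> S" "j \<in> S"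
  shows "bij_betw (\<phi>(i := \<phi> j, j := \<phi> i)) S T"
proof -
  have "\<phi>(i := \<phi> j, j := \<phi> i) = \<phi> \<circ> (id(i := j, j := i))" by auto
  moreover have "bij_betw (id(i := j, j := i)) S S"
    unfolding bij_betw_def inj_on_def using assms(2,3) by (auto simp: image_def split: if_splits)
  ultimately show ?thesis using assms(1) bij_betw_trans by metis
qed

lemma ham:
  assumes "bij_betw \<phi> {..<N} V" "badset E dir N \<phi> = {}"
  shows "hamilton_copy N dir V E \<phi>"
  using assms unfolding hamilton_copy_def is_copy_def opath_edge_def badset_def okrel_def
  by (auto simp: bij_betw_def)

lemma ends_bij:
  assumes "finite S" "card S = Suc N" "x \<in> S" "y \<in> S" "x \<noteq> y"
  shows "\<exists>f. bij_betw f {..<Suc N} S \<and> f 0 = x \<and> f N = y"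
proof -
  obtain xs where xs: "set xs = S - {x,y}" "distinct xs" using finite_distinct_list assms(1) by (meson finite_Diff)
  define L where "L = x # xs @ [y]"
  have d: "distinct L" using xs assms unfolding L_def by auto
  have s: "set L = S" using xs assms unfolding L_def by auto
  have l: "length L = Suc N" using distinct_card[OF d] s assms(2) by simp
  have "bij_betw ((!) L) {..<Suc N} S" by (rule bij_betw_nth) (use d s l in auto)
  moreover have "L ! 0 = x" unfolding L_def by simp
  moreover have "L ! N = y"
  proof -
    have "N = Suc (length xs)" using l unfolding L_def by simp
    then show ?thesis unfolding L_def by (simp add: nth_append)
  qed
  ultimately show ?thesis by blast
qed

lemma miss_bound:
  assumes "finite T" "T \<subseteq> V" "{w\<in>V. E u w} \<subseteq> T" "{w\<in>V. E w u} \<subseteq> T"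
    "\<delta> \<le> outdeg V E u" "\<delta> \<le> indeg V E u"
  shows "card {w\<in>T. \<not> okrel E dd u w} \<le> card T - \<delta>" "card {w\<in>T. \<not> okrel E dd w u} \<le> card T - \<delta>"
proof -
  have o: "card {w\<in>T. \<not> E u w} = card T - outdeg V E u"
  proof -
    have "{w\<in>T. \<not> E u w} = T - {w\<in>V. E u w}" using assms by auto
    then show ?thesis using card_Diff_subset[OF finite_subset[OF assms(3,1)] assms(3)]
      unfolding outdeg_def by simp
  qed
  have i: "card {w\<in>T. \<not> E w u} = card T - indeg V E u"
  proof -
    have "{w\<in>T. \<not> E w u} = T - {w\<in>V. E w u}" using assms by auto
    then show ?thesis using card_Diff_subset[OF finite_subset[OF assms(4,1)] assms(4)]
      unfolding indeg_def by simp
  qed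
  show "card {w\<in>T. \<not> okrel E dd u w} \<le> card T - \<delta>"
    using o i assms(5,6) unfolding okrel_def by (cases dd) auto
  show "card {w\<in>T. \<not> okrel E dd w u} \<le> card T - \<delta>"
    using o i assms(5,6) unfolding okrel_def by (cases dd) auto
qed

lemma semideg_le:
  assumes "finite V" "v \<in> V"
  shows "min_semideg V E \<le> outdeg V E v" "min_semideg V E \<le> indeg V E v"
  using Min_le[of "(\<lambda>v. min (outdeg V E v) (indeg V E v)) ` V"] assms
  unfolding min_semideg_def by fastforce+

lemma find_swap:
  assumes inj: "inj_on \<phi> {..<N}" and C: "finite C" "C \<subseteq> {j. 1 \<le> j \<and> Suc j < N}"
    and h1: "\<forall>j\<in>C. \<not> okrel E (dir (i-1)) (\<phi> (i-1)) (\<phi> j) \<longrightarrow> \<phi> j \<in> M1"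
    and h2: "\<forall>j\<in>C. \<not> okrel E (dir i) (\<phi> j) (\<phi> (Suc i)) \<longrightarrow> \<phi> j \<in> M2"
    and h3: "\<forall>j\<in>C. \<not> okrel E (dir (j-1)) (\<phi> (j-1)) (\<phi> i) \<longrightarrow> \<phi> (j-1) \<in> M3"
    and h4: "\<forall>j\<in>C. \<not> okrel E (dir j) (\<phi> i) (\<phi> (Suc j)) \<longrightarrow> \<phi> (Suc j) \<in> M4"
    and fin: "finite M1" "finite M2" "finite M3" "finite M4"
    and lt: "card M1 + card M2 + card M3 + card M4 < card C"
  shows "\<exists>j\<in>C. okrel E (dir (i-1)) (\<phi> (i-1)) (\<phi> j) \<and> okrel E (dir i) (\<phi> j) (\<phi> (Suc i)) \<and>
     okrel E (dir (j-1)) (\<phi> (j-1)) (\<phi> i) \<and> okrel E (dir j) (\<phi> i) (\<phi> (Suc j))"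
proof (rule ccontr)
  assume na: "\<not> ?thesis"
  define K1 where "K1 = {j\<in>C. \<not> okrel E (dir (i-1)) (\<phi> (i-1)) (\<phi> j)}"
  define K2 where "K2 = {j\<in>C. \<not> okrel E (dir i) (\<phi> j) (\<phi> (Suc i))}"
  define K3 where "K3 = {j\<in>C. \<not> okrel E (dir (j-1)) (\<phi> (j-1)) (\<phi> i)}"
  define K4 where "K4 = {j\<in>C. \<not> okrel E (dir j) (\<phi> i) (\<phi> (Suc j))}"
  have injC: "inj_on \<phi> C" by (rule inj_on_subset[OF inj]) (use C(2) in auto)
  have c1: "card K1 \<le> card M1"
    by (rule card_inj_on_le[OF inj_on_subset[OF injC]]) (use h1 fin in \<open>auto simp: K1_def\<close>)
  have c2: "card K2 \<le> card M2"
    by (rule card_inj_on_le[OF inj_on_subset[OF injC]]) (use h2 fin in \<open>auto simp: K2_def\<close>)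
  have inj3: "inj_on (\<lambda>j. \<phi> (j-1)) C"
  proof (rule inj_onI)
    fix a b assume "a \<in> C" "b \<in> C" "\<phi> (a-1) = \<phi> (b-1)"
    moreover have "a - 1 < N" "b - 1 < N" using \<open>a \<in> C\<close> \<open>b \<in> C\<close> C(2) by auto
    ultimately have "a - 1 = b - 1" using inj unfolding inj_on_def by blast
    moreover have "1 \<le> a" "1 \<le> b" using \<open>a \<in> C\<close> \<open>b \<in> C\<close> C(2) by auto
    ultimately show "a = b" by simp
  qed
  have inj4: "inj_on (\<lambda>j. \<phi> (Suc j)) C"
  proof (rule inj_onI)
    fix a b assume "a \<in> C" "b \<in> C" "\<phi> (Suc a) = \<phi> (Suc b)"
    moreover have "Suc a < N" "Suc b < N" using \<open>a \<in> C\<close> \<open>b \<in> C\<close> C(2) by auto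
    ultimately show "a = b" using inj unfolding inj_on_def by blast
  qed
  have c3: "card K3 \<le> card M3"
    by (rule card_inj_on_le[OF inj_on_subset[OF inj3]]) (use h3 fin in \<open>auto simp: K3_def\<close>)
  have c4: "card K4 \<le> card M4"
    by (rule card_inj_on_le[OF inj_on_subset[OF inj4]]) (use h4 fin in \<open>auto simp: K4_def\<close>)
  have "C \<subseteq> K1 \<union> K2 \<union> K3 \<union> K4" using na unfolding K1_def K2_def K3_def K4_def by blast
  then have "card C \<le> card (K1 \<union> K2 \<union> K3 \<union> K4)"
    by (rule card_mono[rotated]) (use C(1) in \<open>auto simp: K1_def K2_def K3_def K4_def\<close>)
  also have "\<dots> \<le> card K1 + card K2 + card K3 + card K4"
    using card_Un_le[of "K1 \<union> K2 \<union> K3" K4] card_Un_le[of "K1 \<union> K2" K3] card_Un_le[of K1 K2] by linarith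
  finally show False using c1 c2 c3 c4 lt by linarith
qed



lemma part1:
  assumes dg: "digraph V E" and deg: "8 * min_semideg V E \<ge> 7 * card V"
    and xy: "x \<in> V" "y \<in> V" "x \<noteq> y"
  shows "\<exists>\<phi>. hamilton_copy (card V) dir V E \<phi> \<and> \<phi> 0 = x \<and> \<phi> (card V - 1) = y"
proof -
  define n where "n = card V"
  define \<delta> where "\<delta> = min_semideg V E"
  have fin: "finite V" using dg unfolding digraph_def by blast
  have loop: "\<And>a b. E a b \<Longrightarrow> a \<in> V \<and> b \<in> V \<and> a \<noteq> b" using dg unfolding digraph_def by blast
  have od: "\<And>v. v \<in> V \<Longrightarrow> \<delta> \<le> outdeg V E v \<and> \<delta> \<le> indeg V E v"
    using semideg_le[OF fin] unfolding \<delta>_def by blast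
  have cVx: "card (V - {x}) = n - 1" using fin xy unfolding n_def by simp
  have "outdeg V E x \<le> card (V - {x})"
    unfolding outdeg_def by (rule card_mono) (use fin loop in auto)
  then have dle: "\<delta> \<le> n - 1" using od[OF xy(1)] cVx by linarith
  have n1: "n \<ge> 1" using fin xy unfolding n_def by (metis card_0_eq empty_iff less_one not_le)
  have deg': "8 * \<delta> \<ge> 7 * n" using deg unfolding \<delta>_def n_def .
  have n8: "n \<ge> 8" using dle n1 deg' by linarith
  have mb: "card {w\<in>V-{u}. \<not> okrel E dd u w} \<le> n - 1 - \<delta> \<and> card {w\<in>V-{u}. \<not> okrel E dd w u} \<le> n - 1 - \<delta>"
    if u: "u \<in> V" for u dd
  proof -
    have c: "card (V - {u}) = n - 1" using fin u unfolding n_def by simp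
    show ?thesis
      using miss_bound[of "V-{u}" V E u \<delta> dd] od[OF u] fin loop c by auto
  qed
  define P where "P \<phi> \<longleftrightarrow> bij_betw \<phi> {..<n} V \<and> \<phi> 0 = x \<and> \<phi> (n-1) = y" for \<phi>
  obtain \<phi>0 where "bij_betw \<phi>0 {..<Suc (n-1)} V" "\<phi>0 0 = x" "\<phi>0 (n-1) = y"
    using ends_bij[OF fin _ xy, of "n-1"] n1 unfolding n_def by auto
  then have P0: "P \<phi>0" unfolding P_def using n1 by simp
  have step: "\<exists>\<phi>'. P \<phi>' \<and> badset E dir n \<phi>' \<subset> badset E dir n \<phi>"
    if P: "P \<phi>" and ne: "badset E dir n \<phi> \<noteq> {}" for \<phi>
  proof -
    obtain p0 where p0: "p0 \<in> badset E dir n \<phi>" using ne by blast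
    then have sp0: "Suc p0 < n" unfolding badset_def by auto
    define i where "i = (if p0 \<ge> 1 then p0 else 1)"
    have i: "1 \<le> i" "Suc i < n" "p0 = i - 1 \<or> p0 = i" using sp0 n8 unfolding i_def by auto
    have bij: "bij_betw \<phi> {..<n} V" using P unfolding P_def by blast
    have inj: "inj_on \<phi> {..<n}" using bij bij_betw_imp_inj_on by blast
    have img: "\<And>k. k < n \<Longrightarrow> \<phi> k \<in> V" using bij bij_betwE by blast
    have neq: "\<And>a b. a < n \<Longrightarrow> b < n \<Longrightarrow> a \<noteq> b \<Longrightarrow> \<phi> a \<noteq> \<phi> b"
      using inj unfolding inj_on_def by blast
    define C where "C = {1..n-2} - {i-1, i, Suc i}"
    have "card {1..n-2} - card {i-1, i, Suc i} \<le> card C"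
      unfolding C_def by (rule diff_card_le_card_Diff) auto
    moreover have "card {i-1, i, Suc i} \<le> 3" by (rule order_trans[OF card_insert_le_m1]) (auto simp: card_insert_le_m1)
    ultimately have cardC: "n - 5 \<le> card C" by simp
    have Csub: "C \<subseteq> {j. 1 \<le> j \<and> Suc j < n}" unfolding C_def using n8 by auto
    define a1 where "a1 = \<phi> (i-1)"
    define a2 where "a2 = \<phi> (Suc i)"
    define v where "v = \<phi> i"
    have a1V: "a1 \<in> V" "a2 \<in> V" "v \<in> V" using img i unfolding a1_def a2_def v_def by auto
    define M1 where "M1 = {w\<in>V-{a1}. \<not> okrel E (dir (i-1)) a1 w}"
    define M2 where "M2 = {w\<in>V-{a2}. \<not> okrel E (dir i) w a2}"
    define M3 where "M3 = {w\<in>V-{v}. \<not> okrel E True w v} \<union> {w\<in>V-{v}. \<not> okrel E False w v}"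
    define M4 where "M4 = {w\<in>V-{v}. \<not> okrel E True v w} \<union> {w\<in>V-{v}. \<not> okrel E False v w}"
    have cM1: "card M1 \<le> n - 1 - \<delta>" using mb[OF a1V(1)] unfolding M1_def by blast
    have cM2: "card M2 \<le> n - 1 - \<delta>" using mb[OF a1V(2)] unfolding M2_def by blast
    have cM3: "card M3 \<le> 2 * (n - 1 - \<delta>)" unfolding M3_def
      using mb[OF a1V(3), of True] mb[OF a1V(3), of False] card_Un_le by (smt (verit) add_mono le_trans mult_2)
    have cM4: "card M4 \<le> 2 * (n - 1 - \<delta>)" unfolding M4_def
      using mb[OF a1V(3), of True] mb[OF a1V(3), of False] card_Un_le by (smt (verit) add_mono le_trans mult_2)
    have lt: "card M1 + card M2 + card M3 + card M4 < card C"
      using cM1 cM2 cM3 cM4 cardC dle deg' n8 by linarith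
    have h1: "\<forall>j\<in>C. \<not> okrel E (dir (i-1)) (\<phi> (i-1)) (\<phi> j) \<longrightarrow> \<phi> j \<in> M1"
    proof (intro ballI impI)
      fix j assume j: "j \<in> C" "\<not> okrel E (dir (i-1)) (\<phi> (i-1)) (\<phi> j)"
      have "\<phi> j \<noteq> a1" unfolding a1_def using j(1) i Csub by (intro neq) (auto simp: C_def)
      then show "\<phi> j \<in> M1" using j img Csub unfolding M1_def a1_def by auto
    qed
    have h2: "\<forall>j\<in>C. \<not> okrel E (dir i) (\<phi> j) (\<phi> (Suc i)) \<longrightarrow> \<phi> j \<in> M2"
    proof (intro ballI impI)
      fix j assume j: "j \<in> C" "\<not> okrel E (dir i) (\<phi> j) (\<phi> (Suc i))"
      have "\<phi> j \<noteq> a2" unfolding a2_def using j(1) i Csub by (intro neq) (auto simp: C_def)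
      then show "\<phi> j \<in> M2" using j img Csub unfolding M2_def a2_def by auto
    qed
    have h3: "\<forall>j\<in>C. \<not> okrel E (dir (j-1)) (\<phi> (j-1)) (\<phi> i) \<longrightarrow> \<phi> (j-1) \<in> M3"
    proof (intro ballI impI)
      fix j assume j: "j \<in> C" "\<not> okrel E (dir (j-1)) (\<phi> (j-1)) (\<phi> i)"
      have "\<phi> (j-1) \<noteq> v" unfolding v_def using j(1) i Csub by (intro neq) (auto simp: C_def)
      moreover have "\<phi> (j-1) \<in> V" using j(1) Csub img by auto
      ultimately show "\<phi> (j-1) \<in> M3" using j unfolding M3_def v_def by (cases "dir (j-1)") auto
    qed
    have h4: "\<forall>j\<in>C. \<not> okrel E (dir j) (\<phi> i) (\<phi> (Suc j)) \<longrightarrow> \<phi> (Suc j) \<in> M4"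
    proof (intro ballI impI)
      fix j assume j: "j \<in> C" "\<not> okrel E (dir j) (\<phi> i) (\<phi> (Suc j))"
      have "\<phi> (Suc j) \<noteq> v" unfolding v_def using j(1) i Csub by (intro neq) (auto simp: C_def)
      moreover have "\<phi> (Suc j) \<in> V" using j(1) Csub img by auto
      ultimately show "\<phi> (Suc j) \<in> M4" using j unfolding M4_def v_def by (cases "dir j") auto
    qed
    obtain j where j: "j \<in> C" "okrel E (dir (i-1)) (\<phi> (i-1)) (\<phi> j)" "okrel E (dir i) (\<phi> j) (\<phi> (Suc i))"
      "okrel E (dir (j-1)) (\<phi> (j-1)) (\<phi> i)" "okrel E (dir j) (\<phi> i) (\<phi> (Suc j))"
    proof -
      have "finite C" unfolding C_def by auto
      moreover have "finite M1" "finite M2" "finite M3" "finite M4"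
        using fin unfolding M1_def M2_def M3_def M4_def by auto
      ultimately show ?thesis using find_swap[OF inj _ Csub h1 h2 h3 h4 _ _ _ _ lt] that by blast
    qed
    have jj: "1 \<le> j" "Suc j < n" "Suc i < j \<or> Suc j < i" using j(1) Csub unfolding C_def by auto
    define \<phi>' where "\<phi>' = \<phi>(i := \<phi> j, j := \<phi> i)"
    have sb: "badset E dir n \<phi>' \<subseteq> badset E dir n \<phi> - {i-1, i}"
      unfolding \<phi>'_def by (rule swap_bad) (use i jj j in auto)
    have "P \<phi>'" unfolding P_def \<phi>'_def
      using swap_bij[OF bij, of i j] i jj P unfolding P_def by auto
    moreover have "badset E dir n \<phi>' \<subset> badset E dir n \<phi>" using sb p0 i by blast
    ultimately show ?thesis by blast
  qed
  obtain \<phi> where "P \<phi>" "badset E dir n \<phi> = {}" using descent[of P, OF P0 step] by blast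
  then show ?thesis using ham unfolding P_def n_def by blast
qed



lemma interleave_bij:
  assumes f: "bij_betw f {..<Suc m} A" and g: "bij_betw g {..<m} B" and d: "A \<inter> B = {}"
  shows "bij_betw (\<lambda>k. if even k then f (k div 2) else g (k div 2)) {..<2*m+1} (A \<union> B)"
  unfolding bij_betw_def
proof
  have fi: "inj_on f {..<Suc m}" and gi: "inj_on g {..<m}" using f g bij_betw_imp_inj_on by blast+
  have fA: "\<And>t. t < Suc m \<Longrightarrow> f t \<in> A" using f bij_betwE by blast
  have gB: "\<And>t. t < m \<Longrightarrow> g t \<in> B" using g bij_betwE by blast
  show "inj_on (\<lambda>k. if even k then f (k div 2) else g (k div 2)) {..<2*m+1}"
  proof (rule inj_onI)
    fix a b assume a: "a \<in> {..<2*m+1}" and b: "b \<in> {..<2*m+1}"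
      and e: "(if even a then f (a div 2) else g (a div 2)) = (if even b then f (b div 2) else g (b div 2))"
    have ea: "even a \<Longrightarrow> a div 2 < Suc m" "odd a \<Longrightarrow> a div 2 < m" using a by (auto elim!: evenE oddE)
    have eb: "even b \<Longrightarrow> b div 2 < Suc m" "odd b \<Longrightarrow> b div 2 < m" using b by (auto elim!: evenE oddE)
    show "a = b"
    proof (cases "even a"; cases "even b")
      assume "even a" "even b"
      then have "a div 2 = b div 2" using e ea eb fi unfolding inj_on_def by auto
      then show ?thesis using \<open>even a\<close> \<open>even b\<close> by (metis dvd_mult_div_cancel)
    next
      assume "even a" "odd b"
      then have "f (a div 2) \<in> A" "g (b div 2) \<in> B" "f (a div 2) = g (b div 2)"
        using e ea(1) eb(2) fA[of "a div 2"] gB[of "b div 2"] by auto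
      then show ?thesis using d by (metis disjoint_iff)
    next
      assume "odd a" "even b"
      then have "g (a div 2) \<in> B" "f (b div 2) \<in> A" "g (a div 2) = f (b div 2)"
        using e ea(2) eb(1) fA[of "b div 2"] gB[of "a div 2"] by auto
      then show ?thesis using d by (metis disjoint_iff)
    next
      assume "odd a" "odd b"
      then have "a div 2 = b div 2" using e ea eb gi unfolding inj_on_def by auto
      then show ?thesis using \<open>odd a\<close> \<open>odd b\<close> by (metis odd_two_times_div_two_succ)
    qed
  qed
  show "(\<lambda>k. if even k then f (k div 2) else g (k div 2)) ` {..<2*m+1} = A \<union> B"
  proof
    show "(\<lambda>k. if even k then f (k div 2) else g (k div 2)) ` {..<2*m+1} \<subseteq> A \<union> B"
    proof
      fix z assume "z \<in> (\<lambda>k. if even k then f (k div 2) else g (k div 2)) ` {..<2*m+1}"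
      then obtain k where k: "k < 2*m+1" "z = (if even k then f (k div 2) else g (k div 2))" by auto
      show "z \<in> A \<union> B"
      proof (cases "even k")
        case True then have "k div 2 < Suc m" using k by (auto elim!: evenE)
        then show ?thesis using k True fA by auto
      next
        case False then have "k div 2 < m" using k by (auto elim!: oddE)
        then show ?thesis using k False gB by auto
      qed
    qed
    show "A \<union> B \<subseteq> (\<lambda>k. if even k then f (k div 2) else g (k div 2)) ` {..<2*m+1}"
    proof
      fix z assume "z \<in> A \<union> B"
      then show "z \<in> (\<lambda>k. if even k then f (k div 2) else g (k div 2)) ` {..<2*m+1}"
      proof
        assume "z \<in> A"
        then obtain t where t: "t < Suc m" "z = f t" using f unfolding bij_betw_def by auto
        then show ?thesis by (intro image_eqI[of _ _ "2*t"]) auto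
      next
        assume "z \<in> B"
        then obtain t where t: "t < m" "z = g t" using g unfolding bij_betw_def by auto
        then show ?thesis by (intro image_eqI[of _ _ "2*t+1"]) auto
      qed
    qed
  qed
qed

lemma part2:
  assumes m10: "m \<ge> 10" and dg: "digraph (A \<union> B) E" and disj: "A \<inter> B = {}"
    and cA: "card A = m + 1" and cB: "card B = m"
    and bip: "\<forall>u v. E u v \<longrightarrow> (u \<in> A \<and> v \<in> B) \<or> (u \<in> B \<and> v \<in> A)"
    and deg: "8 * min_semideg (A \<union> B) E \<ge> 7 * m + 2"
    and xy: "x \<in> A" "y \<in> A" "x \<noteq> y"
  shows "\<exists>\<phi>. hamilton_copy (2 * m + 1) dir (A \<union> B) E \<phi> \<and> \<phi> 0 = x \<and> \<phi> (2 * m) = y"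
proof -
  define V where "V = A \<union> B"
  define \<delta> where "\<delta> = min_semideg V E"
  define N where "N = 2 * m + 1"
  have fin: "finite V" using dg unfolding digraph_def V_def by blast
  have finA: "finite A" "finite B" using fin unfolding V_def by auto
  have od: "\<And>v. v \<in> V \<Longrightarrow> \<delta> \<le> outdeg V E v \<and> \<delta> \<le> indeg V E v"
    using semideg_le[OF fin] unfolding \<delta>_def by blast
  have deg': "8 * \<delta> \<ge> 7 * m + 2" using deg unfolding \<delta>_def V_def .
  have "outdeg V E x \<le> card B"
    unfolding outdeg_def by (rule card_mono) (use finA bip xy disj in auto)
  then have dle: "\<delta> \<le> m" using od[of x] xy cB unfolding V_def by auto
  have mbA: "card {w\<in>B. \<not> okrel E dd u w} \<le> m - \<delta> \<and> card {w\<in>B. \<not> okrel E dd w u} \<le> m - \<delta>"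
    if u: "u \<in> A" for u dd
    using miss_bound[of B V E u \<delta> dd] od[of u] finA bip u disj cB unfolding V_def by auto
  have mbB: "card {w\<in>A. \<not> okrel E dd u w} \<le> m + 1 - \<delta> \<and> card {w\<in>A. \<not> okrel E dd w u} \<le> m + 1 - \<delta>"
    if u: "u \<in> B" for u dd
    using miss_bound[of A V E u \<delta> dd] od[of u] finA bip u disj cA unfolding V_def by auto
  obtain b where b: "b \<in> B" "okrel E (dir 0) x b"
  proof -
    have "\<not> B \<subseteq> {w\<in>B. \<not> okrel E (dir 0) x w}"
    proof
      assume "B \<subseteq> {w\<in>B. \<not> okrel E (dir 0) x w}"
      then have "card B \<le> card {w\<in>B. \<not> okrel E (dir 0) x w}" by (rule card_mono[rotated]) (use finA in auto)
      then have "card B \<le> m - \<delta>" using mbA[OF xy(1), of "dir 0"] by linarith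
      then show False using cB deg' m10 by linarith
    qed
    then show ?thesis using that by blast
  qed
  obtain b' where b': "b' \<in> B" "b' \<noteq> b" "okrel E (dir (2*m-1)) b' y"
  proof -
    have "\<not> B \<subseteq> insert b {w\<in>B. \<not> okrel E (dir (2*m-1)) w y}"
    proof
      assume "B \<subseteq> insert b {w\<in>B. \<not> okrel E (dir (2*m-1)) w y}"
      then have "card B \<le> card (insert b {w\<in>B. \<not> okrel E (dir (2*m-1)) w y})"
        by (rule card_mono[rotated]) (use finA in auto)
      also have "\<dots> \<le> Suc (card {w\<in>B. \<not> okrel E (dir (2*m-1)) w y})"
        by (rule card_insert_le_m1) auto
      finally show False using mbA[OF xy(2), of "dir (2*m-1)"] cB deg' m10 by linarith
    qed
    then show ?thesis using that by blast
  qed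
  obtain f where f: "bij_betw f {..<Suc m} A" "f 0 = x" "f m = y"
    using ends_bij[OF finA(1) _ xy] cA by auto
  obtain g where g: "bij_betw g {..<Suc (m-1)} B" "g 0 = b" "g (m-1) = b'"
    using ends_bij[OF finA(2) _ b(1) b'(1) b'(2)[symmetric], of "m-1"] cB m10 by auto
  have g': "bij_betw g {..<m} B" proof -
    have "Suc (m-1) = m" using m10 by simp
    then show ?thesis using g(1) by simp
  qed
  define \<phi>0 where "\<phi>0 = (\<lambda>k. if even k then f (k div 2) else g (k div 2))"
  define P where "P \<phi> \<longleftrightarrow> bij_betw \<phi> {..<N} V \<and> \<phi> 0 = x \<and> \<phi> (2*m) = y \<and>
     (\<forall>k<N. (even k \<longrightarrow> \<phi> k \<in> A) \<and> (odd k \<longrightarrow> \<phi> k \<in> B)) \<and>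
     0 \<notin> badset E dir N \<phi> \<and> 2*m-1 \<notin> badset E dir N \<phi>" for \<phi>
  have P0: "P \<phi>0"
  proof -
    have bj: "bij_betw \<phi>0 {..<N} V" unfolding \<phi>0_def N_def V_def
      by (rule interleave_bij[OF f(1) g' disj])
    have cl: "\<forall>k<N. (even k \<longrightarrow> \<phi>0 k \<in> A) \<and> (odd k \<longrightarrow> \<phi>0 k \<in> B)"
    proof (intro allI impI conjI)
      fix k assume k: "k < N"
      show "even k \<Longrightarrow> \<phi>0 k \<in> A"
      proof -
        assume "even k" then have "k div 2 < Suc m" using k unfolding N_def by (auto elim!: evenE)
        then show ?thesis using \<open>even k\<close> bij_betwE[OF f(1)] unfolding \<phi>0_def by simp
      qed
      show "odd k \<Longrightarrow> \<phi>0 k \<in> B"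
      proof -
        assume "odd k" then have "k div 2 < m" using k unfolding N_def by (auto elim!: oddE)
        then show ?thesis using \<open>odd k\<close> bij_betwE[OF g'] unfolding \<phi>0_def by simp
      qed
    qed
    have e1: "\<phi>0 0 = x" "\<phi>0 1 = b" using f g unfolding \<phi>0_def by auto
    have e2: "\<phi>0 (2*m) = y" using f unfolding \<phi>0_def by simp
    have o: "odd (2*m-1)" "(2*m-1) div 2 = m - 1" "Suc (2*m-1) = 2*m" using m10 by presburger+
    have e3: "\<phi>0 (2*m-1) = b'" using o g unfolding \<phi>0_def by simp
    have "0 \<notin> badset E dir N \<phi>0" using e1 b unfolding badset_def by simp
    moreover have "2*m-1 \<notin> badset E dir N \<phi>0" using e2 e3 o b' unfolding badset_def by simp
    ultimately show ?thesis using bj cl e1 e2 unfolding P_def by blast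
  qed
  have step: "\<exists>\<phi>'. P \<phi>' \<and> badset E dir N \<phi>' \<subset> badset E dir N \<phi>"
    if P: "P \<phi>" and ne: "badset E dir N \<phi> \<noteq> {}" for \<phi>
  proof -
    obtain p0 where p0: "p0 \<in> badset E dir N \<phi>" using ne by blast
    have nb: "0 \<notin> badset E dir N \<phi>" "2*m-1 \<notin> badset E dir N \<phi>" using P unfolding P_def by auto
    have sp0: "Suc p0 < N" using p0 unfolding badset_def by auto
    have sp1a: "p0 \<noteq> 0" using p0 nb(1) by metis
    have sp1b: "p0 \<noteq> 2*m-1" using p0 nb(2) by metis
    note sp1 = sp1a sp1b
    define i where "i = (if even p0 then p0 else Suc p0)"
    have i: "even i" "2 \<le> i" "i \<le> 2*m-2" "p0 = i - 1 \<or> p0 = i"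
      using sp0 sp1 unfolding i_def N_def by presburger+
    have bij: "bij_betw \<phi> {..<N} V" using P unfolding P_def by blast
    have inj: "inj_on \<phi> {..<N}" using bij bij_betw_imp_inj_on by blast
    have cl: "\<And>k. k < N \<Longrightarrow> even k \<Longrightarrow> \<phi> k \<in> A" "\<And>k. k < N \<Longrightarrow> odd k \<Longrightarrow> \<phi> k \<in> B"
      using P unfolding P_def by blast+
    have neq: "\<And>a b. a < N \<Longrightarrow> b < N \<Longrightarrow> a \<noteq> b \<Longrightarrow> \<phi> a \<noteq> \<phi> b"
      using inj unfolding inj_on_def by blast
    define C where "C = ((\<lambda>t. 2*t) ` {1..m-1}) - {i}"
    have "i \<in> (\<lambda>t. 2*t) ` {1..m-1}" using i by (auto elim!: evenE)
    moreover have "card ((\<lambda>t. 2*t) ` {1..m-1}) = m - 1" by (subst card_image) (auto simp: inj_on_def)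
    ultimately have cardC: "card C = m - 2" unfolding C_def by simp
    have Csub: "C \<subseteq> {j. 1 \<le> j \<and> Suc j < N}" unfolding C_def N_def using m10 by auto
    have Ceven: "\<And>j. j \<in> C \<Longrightarrow> even j \<and> 2 \<le> j \<and> j \<noteq> i \<and> Suc j < N" unfolding C_def N_def by auto
    define a1 where "a1 = \<phi> (i-1)"
    define a2 where "a2 = \<phi> (Suc i)"
    define v where "v = \<phi> i"
    have iN: "i < N" "i - 1 < N" "Suc i < N" using i m10 unfolding N_def by auto
    have a1B: "a1 \<in> B" "a2 \<in> B" "v \<in> A" using cl iN i unfolding a1_def a2_def v_def by auto
    define S1 where "S1 = {w\<in>A. \<not> okrel E (dir (i-1)) a1 w}"
    define S2 where "S2 = {w\<in>A. \<not> okrel E (dir i) w a2}"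
    define M1 where "M1 = S1 - {v}"
    define M2 where "M2 = S2 - {v}"
    define M3 where "M3 = {w\<in>B. \<not> okrel E True w v} \<union> {w\<in>B. \<not> okrel E False w v}"
    define M4 where "M4 = {w\<in>B. \<not> okrel E True v w} \<union> {w\<in>B. \<not> okrel E False v w}"
    have fS: "finite S1" "finite S2" using finA unfolding S1_def S2_def by auto
    have cS: "card S1 \<le> m + 1 - \<delta>" "card S2 \<le> m + 1 - \<delta>"
      using mbB[OF a1B(1)] mbB[OF a1B(2)] unfolding S1_def S2_def by blast+
    have vS: "v \<in> S1 \<or> v \<in> S2"
    proof -
      have nb: "\<not> okrel E (dir p0) (\<phi> p0) (\<phi> (Suc p0))" using p0 unfolding badset_def by blast
      show ?thesis
      proof (cases "p0 = i - 1")
        case True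
        then have "Suc p0 = i" using i(2) by simp
        then have "\<not> okrel E (dir (i-1)) a1 v" using nb True unfolding a1_def v_def by simp
        then show ?thesis using a1B(3) unfolding S1_def by blast
      next
        case False
        then have "p0 = i" using i(4) by blast
        then have "\<not> okrel E (dir i) v a2" using nb unfolding a2_def v_def by simp
        then show ?thesis using a1B(3) unfolding S2_def by blast
      qed
    qed
    have cM12: "card M1 + card M2 + 1 \<le> card S1 + card S2"
    proof -
      have "card M1 \<le> card S1" "card M2 \<le> card S2" unfolding M1_def M2_def
        by (rule card_Diff1_le)+
      moreover have "card M1 + 1 = card S1" if "v \<in> S1"
      proof -
        have "card S1 > 0" using that fS(1) card_gt_0_iff by blast
        then show ?thesis unfolding M1_def using card_Diff_singleton[OF that] by simp
      qed
      moreover have "card M2 + 1 = card S2" if "v \<in> S2"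
      proof -
        have "card S2 > 0" using that fS(2) card_gt_0_iff by blast
        then show ?thesis unfolding M2_def using card_Diff_singleton[OF that] by simp
      qed
      ultimately show ?thesis using vS by linarith
    qed
    have cM3: "card M3 \<le> 2 * (m - \<delta>)" unfolding M3_def
      using mbA[OF a1B(3), of True] mbA[OF a1B(3), of False] card_Un_le by (smt (verit) add_mono le_trans mult_2)
    have cM4: "card M4 \<le> 2 * (m - \<delta>)" unfolding M4_def
      using mbA[OF a1B(3), of True] mbA[OF a1B(3), of False] card_Un_le by (smt (verit) add_mono le_trans mult_2)
    have lt: "card M1 + card M2 + card M3 + card M4 < card C"
      using cM12 cS cM3 cM4 cardC dle deg' m10 by linarith
    have h1: "\<forall>j\<in>C. \<not> okrel E (dir (i-1)) (\<phi> (i-1)) (\<phi> j) \<longrightarrow> \<phi> j \<in> M1"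
    proof (intro ballI impI)
      fix j assume j: "j \<in> C" "\<not> okrel E (dir (i-1)) (\<phi> (i-1)) (\<phi> j)"
      have "\<phi> j \<noteq> v" unfolding v_def using Ceven[OF j(1)] iN by (intro neq) auto
      moreover have "\<phi> j \<in> A" using Ceven[OF j(1)] cl by auto
      ultimately show "\<phi> j \<in> M1" using j unfolding M1_def S1_def a1_def by auto
    qed
    have h2: "\<forall>j\<in>C. \<not> okrel E (dir i) (\<phi> j) (\<phi> (Suc i)) \<longrightarrow> \<phi> j \<in> M2"
    proof (intro ballI impI)
      fix j assume j: "j \<in> C" "\<not> okrel E (dir i) (\<phi> j) (\<phi> (Suc i))"
      have "\<phi> j \<noteq> v" unfolding v_def using Ceven[OF j(1)] iN by (intro neq) auto
      moreover have "\<phi> j \<in> A" using Ceven[OF j(1)] cl by auto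
      ultimately show "\<phi> j \<in> M2" using j unfolding M2_def S2_def a2_def by auto
    qed
    have h3: "\<forall>j\<in>C. \<not> okrel E (dir (j-1)) (\<phi> (j-1)) (\<phi> i) \<longrightarrow> \<phi> (j-1) \<in> M3"
    proof (intro ballI impI)
      fix j assume j: "j \<in> C" "\<not> okrel E (dir (j-1)) (\<phi> (j-1)) (\<phi> i)"
      have "odd (j-1)" "j - 1 < N" using Ceven[OF j(1)] by auto
      then have "\<phi> (j-1) \<in> B" using cl by auto
      then show "\<phi> (j-1) \<in> M3" using j unfolding M3_def v_def by (cases "dir (j-1)") auto
    qed
    have h4: "\<forall>j\<in>C. \<not> okrel E (dir j) (\<phi> i) (\<phi> (Suc j)) \<longrightarrow> \<phi> (Suc j) \<in> M4"
    proof (intro ballI impI)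
      fix j assume j: "j \<in> C" "\<not> okrel E (dir j) (\<phi> i) (\<phi> (Suc j))"
      have "odd (Suc j)" "Suc j < N" using Ceven[OF j(1)] by auto
      then have "\<phi> (Suc j) \<in> B" using cl by auto
      then show "\<phi> (Suc j) \<in> M4" using j unfolding M4_def v_def by (cases "dir j") auto
    qed
    obtain j where j: "j \<in> C" "okrel E (dir (i-1)) (\<phi> (i-1)) (\<phi> j)" "okrel E (dir i) (\<phi> j) (\<phi> (Suc i))"
      "okrel E (dir (j-1)) (\<phi> (j-1)) (\<phi> i)" "okrel E (dir j) (\<phi> i) (\<phi> (Suc j))"
    proof -
      have "finite C" unfolding C_def by auto
      moreover have "finite M1" "finite M2" "finite M3" "finite M4"
        using finA unfolding M1_def M2_def M3_def M4_def S1_def S2_def by auto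
      ultimately show ?thesis using find_swap[OF inj _ Csub h1 h2 h3 h4 _ _ _ _ lt] that by blast
    qed
    have jj: "1 \<le> j" "Suc j < N" "Suc i < j \<or> Suc j < i" "even j" "2 \<le> j" "j \<le> 2*m-2"
    proof -
      show "1 \<le> j" "Suc j < N" "even j" "2 \<le> j" using Ceven[OF j(1)] by auto
      show "j \<le> 2*m-2" using j(1) unfolding C_def by auto
      have "even j" "j \<noteq> i" using Ceven[OF j(1)] by auto
      then show "Suc i < j \<or> Suc j < i" using i(1) by presburger
    qed
    define \<phi>' where "\<phi>' = \<phi>(i := \<phi> j, j := \<phi> i)"
    have sb: "badset E dir N \<phi>' \<subseteq> badset E dir N \<phi> - {i-1, i}"
      unfolding \<phi>'_def by (rule swap_bad) (use i iN jj j in auto)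
    have "bij_betw \<phi>' {..<N} V" unfolding \<phi>'_def using swap_bij[OF bij, of i j] iN jj by auto
    moreover have "\<phi>' 0 = x" "\<phi>' (2*m) = y" using P i jj unfolding \<phi>'_def P_def by auto
    moreover have "\<forall>k<N. (even k \<longrightarrow> \<phi>' k \<in> A) \<and> (odd k \<longrightarrow> \<phi>' k \<in> B)"
      using cl i jj iN unfolding \<phi>'_def by auto
    moreover have "0 \<notin> badset E dir N \<phi>'" "2*m-1 \<notin> badset E dir N \<phi>'" using sb P unfolding P_def by auto
    ultimately have "P \<phi>'" unfolding P_def by blast
    moreover have "badset E dir N \<phi>' \<subset> badset E dir N \<phi>" using sb p0 i by blast
    ultimately show ?thesis by blast
  qed
  obtain \<phi> where "P \<phi>" "badset E dir N \<phi> = {}" using descent[of P, OF P0 step] by blast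
  then show ?thesis using ham unfolding P_def N_def V_def by blast
qed

theorem proposition4p2:
  shows
  "(\<forall>(V :: 'a set) E x y (dir :: nat \<Rightarrow> bool).
      digraph V E \<and> 8 * min_semideg V E \<ge> 7 * card V \<and>
      x \<in> V \<and> y \<in> V \<and> x \<noteq> y \<longrightarrow>
      (\<exists>\<phi>. hamilton_copy (card V) dir V E \<phi> \<and> \<phi> 0 = x \<and> \<phi> (card V - 1) = y))
   \<and>
   (\<forall>(A :: 'b set) B E (m :: nat) x y (dir :: nat \<Rightarrow> bool).
      m \<ge> 10 \<and> digraph (A \<union> B) E \<and> A \<inter> B = {} \<and>
      card A = m + 1 \<and> card B = m \<and>
      (\<forall>u v. E u v \<longrightarrow> (u \<in> A \<and> v \<in> B) \<or> (u \<in> B \<and> v \<in> A)) \<and>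
      8 * min_semideg (A \<union> B) E \<ge> 7 * m + 2 \<and>
      x \<in> A \<and> y \<in> A \<and> x \<noteq> y \<longrightarrow>
      (\<exists>\<phi>. hamilton_copy (2 * m + 1) dir (A \<union> B) E \<phi> \<and> \<phi> 0 = x \<and> \<phi> (2 * m) = y))"
  proof (intro conjI allI impI)
  fix V :: "'a set" and E x y and dir :: "nat \<Rightarrow> bool"
  assume "digraph V E \<and> 8 * min_semideg V E \<ge> 7 * card V \<and> x \<in> V \<and> y \<in> V \<and> x \<noteq> y"
  then show "\<exists>\<phi>. hamilton_copy (card V) dir V E \<phi> \<and> \<phi> 0 = x \<and> \<phi> (card V - 1) = y"
    by (elim conjE) (rule part1)
next
  fix A :: "'b set" and B E and m :: nat and x y and dir :: "nat \<Rightarrow> bool"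
  assume h: "m \<ge> 10 \<and> digraph (A \<union> B) E \<and> A \<inter> B = {} \<and>
      card A = m + 1 \<and> card B = m \<and>
      (\<forall>u v. E u v \<longrightarrow> (u \<in> A \<and> v \<in> B) \<or> (u \<in> B \<and> v \<in> A)) \<and>
      8 * min_semideg (A \<union> B) E \<ge> 7 * m + 2 \<and>
      x \<in> A \<and> y \<in> A \<and> x \<noteq> y"
  show "\<exists>\<phi>. hamilton_copy (2 * m + 1) dir (A \<union> B) E \<phi> \<and> \<phi> 0 = x \<and> \<phi> (2 * m) = y"
    using h by (elim conjE) (rule part2)
qed

end
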